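(* Let $E$ be a Banach space and $P$ a metric space. For $\mu\in P$ and $\lambda>0$ let $\{R^{(\mu,\lambda)}(t,s)\}_{t\geq s\geq0}$ be evolution systems on $E$ such that (H4) there are $M\geq1$, $\omega\in\mathbb{R}$ with $\|R^{(\mu,\lambda)}(t,s)\|\leq Me^{\omega(t-s)}$ for all $\mu,\lambda$ and $0\leq s\leq t$; and (H5) there are $C_0$ semigroups $\{\widehat S^{(\mu)}(t)\}_{t\geq0}$, $\mu\in P$, on $E$ such that for any $t\geq0$, $s\in[0,t]$, $\mu\in P$, $\bar u\in E$, $\lim_{\lambda\to0^+,\ \bar v\to\bar u,\ \nu\to\mu}R^{(\nu,\lambda)}(t,s)\bar v=\widehat S^{(\mu)}(t-s)\bar u$, uniformly for $t,s$ from bounded intervals. Let $(T_n)$ in $(0,+\infty)$, $(k_n)$ positive integers, $(\lambda_n)$ in $(0,+\infty)$, $(\mu_n)$ in $P$ be such that $T_n\to+\infty$, $k_n\to\infty$, $\lambda_n\to0$, $k_n\lambda_nT_n\to t$ for some $t>0$, $\mu_n\to\mu_0\in P$, and $k_n\lambda_nT_n\leq t$ for almost all $n$. Then for any continuous $w:[0,t]\to E$, $\lambda_nT_n\sum_{k=0}^{k_n-1}R^{(\mu_n,\lambda_n)}(k_n\lambda_nT_n,k\lambda_nT_n)w(k\lambda_nT_n)\to\int_0^t\widehat S^{(\mu_0)}(t-s)w(s)\,ds$ as $n\to+\infty$.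
   Context: An evolution system on $E$ is a family $\{R(t,s)\}_{t\geq s\geq 0}$ of bounded linear operators with $R(t,t)=I$, $R(t,s)R(s,r)=R(t,r)$ for $t\geq s\geq r\geq 0$, and $(s,t)\mapsto R(t,s)\bar u$ continuous for each $\bar u\in E$. *)

theory Defs
  imports "HOL-Analysis.Analysis"
begin

text \<open>An evolution system on E: family R(t,s), t >= s >= 0, of bounded linear operators
  (here given as a total function of (t,s), only its values on t >= s >= 0 matter).\<close>
definition evolution_system :: "(real \<Rightarrow> real \<Rightarrow> ('a::banach \<Rightarrow>\<^sub>L 'a)) \<Rightarrow> bool" where
  "evolution_system R \<longleftrightarrow>
     (\<forall>t\<ge>0. R t t = id_blinfun) \<and>
     (\<forall>t s r. 0 \<le> r \<and> r \<le> s \<and> s \<le> t \<longrightarrow> R t s o\<^sub>L R s r = R t r) \<and>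
     (\<forall>u. continuous_on {(s, t). 0 \<le> s \<and> s \<le> t} (\<lambda>(s, t). blinfun_apply (R t s) u))"

definition C0_semigroup :: "(real \<Rightarrow> ('a::banach \<Rightarrow>\<^sub>L 'a)) \<Rightarrow> bool" where
  "C0_semigroup S \<longleftrightarrow>
     S 0 = id_blinfun \<and>
     (\<forall>t s. 0 \<le> t \<and> 0 \<le> s \<longrightarrow> S (t + s) = S t o\<^sub>L S s) \<and>
     (\<forall>u. ((\<lambda>t. blinfun_apply (S t) u) \<longlongrightarrow> u) (at_right 0))"

end

theory Submission
  imports Defs
begin

theorem lemma2p5:
  fixes R :: "'p::metric_space \<Rightarrow> real \<Rightarrow> real \<Rightarrow> real \<Rightarrow> ('a::banach \<Rightarrow>\<^sub>L 'a)"
    and S :: "'p \<Rightarrow> real \<Rightarrow> ('a \<Rightarrow>\<^sub>L 'a)"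
    and M \<omega> t :: real
    and T lam :: "nat \<Rightarrow> real" and k :: "nat \<Rightarrow> nat" and mu :: "nat \<Rightarrow> 'p" and mu0 :: 'p
    and w :: "real \<Rightarrow> 'a"
  assumes evol: "\<And>\<mu> l. l > 0 \<Longrightarrow> evolution_system (R \<mu> l)"
    and H4_M: "M \<ge> 1"
    and H4: "\<And>\<mu> l t s. l > 0 \<Longrightarrow> 0 \<le> s \<Longrightarrow> s \<le> t \<Longrightarrow> norm (R \<mu> l t s) \<le> M * exp (\<omega> * (t - s))"
    and H5_S: "\<And>\<mu>. C0_semigroup (S \<mu>)"
    and H5: "\<And>\<mu> u Tb \<epsilon>. \<epsilon> > 0 \<Longrightarrow> \<exists>\<delta>>0. \<forall>\<nu> l v t s.
              0 < l \<and> l < \<delta> \<and> dist v u < \<delta> \<and> dist \<nu> \<mu> < \<delta> \<and> 0 \<le> s \<and> s \<le> t \<and> t \<le> Tb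
              \<longrightarrow> norm (blinfun_apply (R \<nu> l t s) v - blinfun_apply (S \<mu> (t - s)) u) < \<epsilon>"
    and T_pos: "\<And>n. T n > 0" and k_pos: "\<And>n. k n > 0" and lam_pos: "\<And>n. lam n > 0"
    and T_lim: "filterlim T at_top sequentially"
    and k_lim: "filterlim k at_top sequentially"
    and lam_lim: "lam \<longlonglongrightarrow> 0"
    and t_pos: "t > 0"
    and klT_lim: "(\<lambda>n. real (k n) * lam n * T n) \<longlonglongrightarrow> t"
    and mu_lim: "mu \<longlonglongrightarrow> mu0"
    and klT_le: "eventually (\<lambda>n. real (k n) * lam n * T n \<le> t) sequentially"
    and w_cont: "continuous_on {0..t} w"
  shows "(\<lambda>n. (lam n * T n) *\<^sub>R
            (\<Sum>j<k n. blinfun_apply (R (mu n) (lam n) (real (k n) * lam n * T n) (real j * lam n * T n))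
                         (w (real j * lam n * T n))))
         \<longlonglongrightarrow> integral {0..t} (\<lambda>s. blinfun_apply (S mu0 (t - s)) (w s))"
proof -
  have Scont: "continuous_on {0..Tb} (\<lambda>r. blinfun_apply (S \<mu> r) u)" for \<mu> u Tb
  proof (rule uniform_limit_theorem[where F="at_right 0" and f="\<lambda>l r. blinfun_apply (R \<mu> l r 0) u"])
    show "\<forall>\<^sub>F l in at_right 0. continuous_on {0..Tb} (\<lambda>r. blinfun_apply (R \<mu> l r 0) u)"
      using eventually_at_right_less[of "0::real"]
    proof eventually_elim
      case (elim l)
      have c: "continuous_on {(s, t). 0 \<le> s \<and> s \<le> t} (\<lambda>(s, t). blinfun_apply (R \<mu> l t s) u)"
        using evol[OF elim] unfolding evolution_system_def by blast
      have "continuous_on {0..Tb} ((\<lambda>(s, t). blinfun_apply (R \<mu> l t s) u) \<circ> (\<lambda>r. (0::real, r)))"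
        by (rule continuous_on_compose[OF _ continuous_on_subset[OF c]]) (auto intro!: continuous_intros)
      then show ?case by (simp add: o_def)
    qed
    show "uniform_limit {0..Tb} (\<lambda>l r. blinfun_apply (R \<mu> l r 0) u) (\<lambda>r. blinfun_apply (S \<mu> r) u) (at_right 0)"
      unfolding uniform_limit_iff
    proof (intro allI impI)
      fix e :: real assume e: "e > 0"
      obtain \<delta> where d: "\<delta> > 0" and H: "\<And>\<nu> l v t s.
              0 < l \<and> l < \<delta> \<and> dist v u < \<delta> \<and> dist \<nu> \<mu> < \<delta> \<and> 0 \<le> s \<and> s \<le> t \<and> t \<le> Tb
              \<Longrightarrow> norm (blinfun_apply (R \<nu> l t s) v - blinfun_apply (S \<mu> (t - s)) u) < e"
        using H5[OF e, where \<mu>=\<mu> and u=u and Tb=Tb] by blast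
      show "\<forall>\<^sub>F l in at_right 0. \<forall>x\<in>{0..Tb}. dist (blinfun_apply (R \<mu> l x 0) u) (blinfun_apply (S \<mu> x) u) < e"
        unfolding eventually_at_right_field
      proof (intro exI[of _ \<delta>] conjI allI impI ballI)
        fix l x :: real assume "0 < l" "l < \<delta>" "x \<in> {0..Tb}"
        then show "dist (blinfun_apply (R \<mu> l x 0) u) (blinfun_apply (S \<mu> x) u) < e"
          using H[of l u \<mu> 0 x] d by (simp add: dist_norm)
      qed (use d in auto)
    qed
  qed simp
  have Snorm: "norm (S \<mu> r) \<le> M * exp (\<omega> * r)" if r: "r \<ge> 0" for \<mu> r
  proof (rule norm_blinfun_bound)
    show "0 \<le> M * exp (\<omega> * r)" using H4_M by simp
    fix x
    show "norm (blinfun_apply (S \<mu> r) x) \<le> M * exp (\<omega> * r) * norm x"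
    proof (rule field_le_epsilon)
      fix e :: real assume e: "e > 0"
      obtain \<delta> where d: "\<delta> > 0" and H: "\<And>\<nu> l v t s.
              0 < l \<and> l < \<delta> \<and> dist v x < \<delta> \<and> dist \<nu> \<mu> < \<delta> \<and> 0 \<le> s \<and> s \<le> t \<and> t \<le> r
              \<Longrightarrow> norm (blinfun_apply (R \<nu> l t s) v - blinfun_apply (S \<mu> (t - s)) x) < e"
        using H5[OF e, where \<mu>=\<mu> and u=x and Tb=r] by blast
      have 1: "norm (blinfun_apply (R \<mu> (\<delta>/2) r 0) x - blinfun_apply (S \<mu> r) x) < e"
        using H[of "\<delta>/2" x \<mu> 0 r] d r by simp
      have "norm (blinfun_apply (R \<mu> (\<delta>/2) r 0) x) \<le> norm (R \<mu> (\<delta>/2) r 0) * norm x"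
        by (rule norm_blinfun)
      also have "\<dots> \<le> M * exp (\<omega> * r) * norm x"
        using H4[of "\<delta>/2" 0 r \<mu>] d r by (intro mult_right_mono) auto
      finally show "norm (blinfun_apply (S \<mu> r) x) \<le> M * exp (\<omega> * r) * norm x + e"
        using 1 norm_triangle_ineq2[of "blinfun_apply (S \<mu> r) x" "blinfun_apply (R \<mu> (\<delta>/2) r 0) x"]
        by (simp add: norm_minus_commute) 
    qed
  qed
  define B where "B = M * exp (\<bar>\<omega>\<bar> * t)"
  have SB: "norm (S \<mu> r) \<le> B" if "0 \<le> r" "r \<le> t" for \<mu> r
  proof -
    have "\<omega> * r \<le> \<bar>\<omega>\<bar> * t" using that
      by (metis abs_ge_self abs_ge_zero mult_mono order.trans)
    then have "M * exp (\<omega> * r) \<le> B" unfolding B_def using H4_M by simp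
    then show ?thesis using Snorm[OF that(1), where \<mu>=\<mu>] by linarith
  qed
  have B0: "B \<ge> 0" unfolding B_def using H4_M by simp
  define f where "f s = blinfun_apply (S mu0 (t - s)) (w s)" for s
  have fcont: "continuous_on {0..t} f"
    unfolding continuous_on_def
  proof
    fix s0 assume s0: "s0 \<in> {0..t}"
    let ?F = "at s0 within {0..t}"
    have ev: "\<forall>\<^sub>F s in ?F. s \<in> {0..t}"
      by (simp add: eventually_at_filter)
    have wl: "(w \<longlongrightarrow> w s0) ?F"
      using w_cont s0 unfolding continuous_on_def by blast
    have 1: "((\<lambda>s. blinfun_apply (S mu0 (t - s)) (w s - w s0)) \<longlongrightarrow> 0) ?F"
    proof (rule Lim_null_comparison)
      show "\<forall>\<^sub>F s in ?F. norm (blinfun_apply (S mu0 (t - s)) (w s - w s0)) \<le> B * norm (w s - w s0)"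
        using ev
      proof eventually_elim
        case (elim s)
        have "norm (blinfun_apply (S mu0 (t - s)) (w s - w s0)) \<le> norm (S mu0 (t - s)) * norm (w s - w s0)"
          by (rule norm_blinfun)
        also have "\<dots> \<le> B * norm (w s - w s0)"
          using SB[where r="t - s" and \<mu>=mu0] elim by (intro mult_right_mono) auto
        finally show ?case .
      qed
      have "((\<lambda>s. w s - w s0) \<longlongrightarrow> 0) ?F" using wl by (simp add: Lim_null[symmetric])
      then have "((\<lambda>s. norm (w s - w s0)) \<longlongrightarrow> 0) ?F" by (rule tendsto_norm_zero)
      then show "((\<lambda>s. B * norm (w s - w s0)) \<longlongrightarrow> 0) ?F" by (rule tendsto_mult_right_zero)
    qed
    have 2: "((\<lambda>s. blinfun_apply (S mu0 (t - s)) (w s0)) \<longlongrightarrow> blinfun_apply (S mu0 (t - s0)) (w s0)) ?F"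
    proof (rule continuous_on_tendsto_compose[OF Scont[where Tb=t and \<mu>=mu0 and u="w s0"], where g="\<lambda>s. t - s"])
      show "((\<lambda>s. t - s) \<longlongrightarrow> t - s0) ?F" by (intro tendsto_intros)
      show "t - s0 \<in> {0..t}" using s0 by auto
      show "\<forall>\<^sub>F s in ?F. t - s \<in> {0..t}" using ev by eventually_elim auto
    qed
    have "((\<lambda>s. blinfun_apply (S mu0 (t - s)) (w s - w s0) + (blinfun_apply (S mu0 (t - s)) (w s0) - blinfun_apply (S mu0 (t - s0)) (w s0))) \<longlongrightarrow> 0 + 0) ?F"
      using 1 2 by (intro tendsto_add) (simp_all add: Lim_null[symmetric])
    then have "((\<lambda>s. f s - f s0) \<longlongrightarrow> 0) ?F"
      by (simp add: f_def blinfun.diff_right)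
    then show "(f \<longlongrightarrow> f s0) ?F" by (simp add: Lim_null[symmetric])
  qed
  define \<tau> where "\<tau> n = real (k n) * lam n * T n" for n
  have tau_lim: "\<tau> \<longlonglongrightarrow> t" using klT_lim by (simp add: \<tau>_def[abs_def])
  have tau_le: "\<forall>\<^sub>F n in sequentially. \<tau> n \<le> t" using klT_le by (simp add: \<tau>_def)
  have tau_pos: "\<tau> n > 0" for n using k_pos[of n] lam_pos[of n] T_pos[of n] by (simp add: \<tau>_def)
  have U: "\<forall>\<^sub>F n in sequentially. \<forall>s. 0 \<le> s \<and> s \<le> \<tau> n \<longrightarrow>
             norm (blinfun_apply (R (mu n) (lam n) (\<tau> n) s) (w s) - f s) < \<epsilon>" if eps: "\<epsilon> > 0" for \<epsilon>
  proof -
    let ?Q = "\<lambda>n. \<forall>s. 0 \<le> s \<and> s \<le> \<tau> n \<longrightarrow>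
             norm (blinfun_apply (R (mu n) (lam n) (\<tau> n) s) (w s) - f s) < \<epsilon>"
    have "\<forall>\<^sub>F n in sequentially. \<tau> n \<le> t \<longrightarrow> ?Q n"
    proof (rule ccontr)
      assume "\<not> ?thesis"
      then obtain r :: "nat \<Rightarrow> nat" where r: "strict_mono r" and nr: "\<And>m. \<tau> (r m) \<le> t \<and> \<not> ?Q (r m)"
        using not_eventually_sequentiallyD by blast
      then have "\<forall>m. \<exists>s. 0 \<le> s \<and> s \<le> \<tau> (r m) \<and> \<not> norm (blinfun_apply (R (mu (r m)) (lam (r m)) (\<tau> (r m)) s) (w s) - f s) < \<epsilon>"
        by blast
      then obtain sq where sq: "\<And>m. 0 \<le> sq m \<and> sq m \<le> \<tau> (r m) \<and> \<not> norm (blinfun_apply (R (mu (r m)) (lam (r m)) (\<tau> (r m)) (sq m)) (w (sq m)) - f (sq m)) < \<epsilon>"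
        by metis
      have sqin: "\<forall>m. sq m \<in> {0..t}" using sq nr by (meson atLeastAtMost_iff order.trans)
      obtain s0 r2 where s0: "s0 \<in> {0..t}" and r2: "strict_mono (r2 :: nat \<Rightarrow> nat)" and sl: "(sq \<circ> r2) \<longlonglongrightarrow> s0"
        using seq_compactE[OF compact_imp_seq_compact[OF compact_Icc] sqin] by blast
      define \<sigma> where "\<sigma> = r \<circ> r2"
      have \<sigma>: "strict_mono \<sigma>" unfolding \<sigma>_def using r r2 by (rule strict_mono_o)
      define u where "u = w s0"
      obtain \<delta> where d: "\<delta> > 0" and H: "\<And>\<nu> l v t' s.
              0 < l \<and> l < \<delta> \<and> dist v u < \<delta> \<and> dist \<nu> mu0 < \<delta> \<and> 0 \<le> s \<and> s \<le> t' \<and> t' \<le> t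
              \<Longrightarrow> norm (blinfun_apply (R \<nu> l t' s) v - blinfun_apply (S mu0 (t' - s)) u) < \<epsilon>/2"
        using H5[where \<epsilon>="\<epsilon>/2" and \<mu>=mu0 and u=u and Tb=t] eps by auto
      have e1: "\<forall>\<^sub>F m in sequentially. lam (\<sigma> m) < \<delta>"
        using order_tendstoD(2)[OF LIMSEQ_subseq_LIMSEQ[OF lam_lim \<sigma>] d] by (simp add: o_def)
      have e2: "\<forall>\<^sub>F m in sequentially. dist (mu (\<sigma> m)) mu0 < \<delta>"
        using tendstoD[OF LIMSEQ_subseq_LIMSEQ[OF mu_lim \<sigma>] d] by (simp add: o_def)
      have wl: "(\<lambda>m. w (sq (r2 m))) \<longlonglongrightarrow> u"
        unfolding u_def using continuous_on_tendsto_compose[OF w_cont sl s0] sqin by (simp add: o_def)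
      have e3: "\<forall>\<^sub>F m in sequentially. dist (w (sq (r2 m))) u < \<delta>"
        using tendstoD[OF wl d] .
      have taus: "(\<lambda>m. \<tau> (\<sigma> m)) \<longlonglongrightarrow> t"
        using LIMSEQ_subseq_LIMSEQ[OF tau_lim \<sigma>] by (simp add: o_def)
      have inrange: "0 \<le> sq (r2 m) \<and> sq (r2 m) \<le> \<tau> (\<sigma> m) \<and> \<tau> (\<sigma> m) \<le> t" for m
        using sq[of "r2 m"] nr[of "r2 m"] by (simp add: \<sigma>_def)
      have l1: "(\<lambda>m. blinfun_apply (S mu0 (\<tau> (\<sigma> m) - sq (r2 m))) u) \<longlonglongrightarrow> blinfun_apply (S mu0 (t - s0)) u"
      proof (rule continuous_on_tendsto_compose[OF Scont[where Tb=t and \<mu>=mu0 and u=u], where g="\<lambda>m. \<tau> (\<sigma> m) - sq (r2 m)"])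
        show "(\<lambda>m. \<tau> (\<sigma> m) - sq (r2 m)) \<longlonglongrightarrow> t - s0"
          using taus sl by (intro tendsto_intros) (simp_all add: o_def)
        show "t - s0 \<in> {0..t}" using s0 by auto
        show "\<forall>\<^sub>F m in sequentially. \<tau> (\<sigma> m) - sq (r2 m) \<in> {0..t}"
          using inrange by (intro always_eventually) (smt (verit) atLeastAtMost_iff)
      qed
      have l2: "(\<lambda>m. f (sq (r2 m))) \<longlonglongrightarrow> blinfun_apply (S mu0 (t - s0)) u"
        using continuous_on_tendsto_compose[OF fcont sl s0] sqin by (simp add: o_def f_def u_def)
      have l3: "(\<lambda>m. blinfun_apply (S mu0 (\<tau> (\<sigma> m) - sq (r2 m))) u - f (sq (r2 m))) \<longlonglongrightarrow> 0"
        using tendsto_diff[OF l1 l2] by simp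
      have e4: "\<forall>\<^sub>F m in sequentially. norm (blinfun_apply (S mu0 (\<tau> (\<sigma> m) - sq (r2 m))) u - f (sq (r2 m))) < \<epsilon>/2"
        using tendstoD[OF l3, of "\<epsilon>/2"] eps by (simp add: dist_norm)
      from e1 e2 e3 e4 have "\<forall>\<^sub>F m in sequentially. False"
      proof eventually_elim
        case (elim m)
        have a: "norm (blinfun_apply (R (mu (\<sigma> m)) (lam (\<sigma> m)) (\<tau> (\<sigma> m)) (sq (r2 m))) (w (sq (r2 m))) - blinfun_apply (S mu0 (\<tau> (\<sigma> m) - sq (r2 m))) u) < \<epsilon>/2"
          using H[of "lam (\<sigma> m)" "w (sq (r2 m))" "mu (\<sigma> m)" "sq (r2 m)" "\<tau> (\<sigma> m)"] elim inrange[of m] lam_pos[of "\<sigma> m"]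
          by blast
        have "norm (blinfun_apply (R (mu (\<sigma> m)) (lam (\<sigma> m)) (\<tau> (\<sigma> m)) (sq (r2 m))) (w (sq (r2 m))) - f (sq (r2 m))) < \<epsilon>"
          using norm_triangle_lt[OF add_strict_mono[OF a elim(4)]] by simp
        then show False using sq[of "r2 m"] by (simp add: \<sigma>_def)
      qed
      then show False by simp
    qed
    with tau_le show ?thesis by eventually_elim blast
  qed
  have fint: "f integrable_on {0..t}" by (rule integrable_continuous_interval[OF fcont])
  define F where "F x = integral {0..x} f" for x
  have Fstep: "F b - F a = integral {a..b} f" if ab: "0 \<le> a" "a \<le> b" "b \<le> t" for a b
  proof -
    have "f integrable_on {0..b}" using integrable_on_subinterval[OF fint, of 0 b] ab by auto
    then have "integral {0..a} f + integral {a..b} f = integral {0..b} f"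
      using Henstock_Kurzweil_Integration.integral_combine[where a=0 and c=a and b=b and f=f] ab by auto
    then show ?thesis unfolding F_def by (simp add: algebra_simps)
  qed
  have F0: "F 0 = 0" unfolding F_def by simp
  have Flim: "(\<lambda>n. F (\<tau> n)) \<longlonglongrightarrow> F t"
  proof -
    have c: "continuous_on {0..t} F" unfolding F_def[abs_def] by (rule indefinite_integral_continuous_1[OF fint])
    have "\<forall>\<^sub>F n in sequentially. \<tau> n \<in> {0..t}" using tau_le
      by (rule eventually_mono) (use tau_pos in \<open>auto simp: less_imp_le\<close>)
    then show ?thesis using continuous_on_tendsto_compose[OF c tau_lim] t_pos by auto
  qed
  have kinf: "filterlim (\<lambda>n. real (k n)) at_top sequentially"
    by (rule filterlim_compose[OF filterlim_real_sequentially k_lim])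
  have h_lim: "(\<lambda>n. lam n * T n) \<longlonglongrightarrow> 0"
  proof -
    have "(\<lambda>n. \<tau> n * inverse (real (k n))) \<longlonglongrightarrow> t * 0"
      by (intro tendsto_mult tau_lim tendsto_inverse_0_at_top kinf)
    moreover have "\<tau> n * inverse (real (k n)) = lam n * T n" for n
      using k_pos[of n] by (simp add: \<tau>_def field_simps)
    ultimately show ?thesis by simp
  qed
  have Riem: "\<forall>\<^sub>F n in sequentially. norm ((lam n * T n) *\<^sub>R (\<Sum>j<k n. f (real j * lam n * T n)) - F (\<tau> n)) \<le> \<epsilon> * t"
    if eps: "\<epsilon> > 0" for \<epsilon>
  proof -
    obtain d where d: "d > 0" and ud: "\<And>x x'. x \<in> {0..t} \<Longrightarrow> x' \<in> {0..t} \<Longrightarrow> dist x' x < d \<Longrightarrow> dist (f x') (f x) < \<epsilon>"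
      using compact_uniformly_continuous[OF fcont compact_Icc] eps unfolding uniformly_continuous_on_def by metis
    have "\<forall>\<^sub>F n in sequentially. lam n * T n < d"
      using order_tendstoD(2)[OF h_lim d] .
    with tau_le show ?thesis
    proof eventually_elim
      case (elim n)
      define c where "c = lam n * T n"
      have c0: "c > 0" unfolding c_def using lam_pos[of n] T_pos[of n] by simp
      define a where "a j = real j * c" for j :: nat
      have tauc: "\<tau> n = real (k n) * c" unfolding \<tau>_def c_def by simp
      have step: "norm (c *\<^sub>R f (a j) - (F (a (Suc j)) - F (a j))) \<le> \<epsilon> * c" if j: "j < k n" for j
      proof -
        have aS: "a (Suc j) = a j + c" unfolding a_def by (simp add: algebra_simps)
        have a0: "0 \<le> a j" unfolding a_def using c0 by simp
        have "real (Suc j) \<le> real (k n)" using j by simp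
        then have "a (Suc j) \<le> \<tau> n" unfolding a_def tauc using c0 by (intro mult_right_mono) auto
        then have aSt: "a (Suc j) \<le> t" using elim(1) by simp
        have ab: "a j \<le> a (Suc j)" using aS c0 by simp
        have fi: "f integrable_on {a j..a (Suc j)}"
          by (rule integrable_on_subinterval[OF fint]) (use a0 aSt in auto)
        have "c *\<^sub>R f (a j) - (F (a (Suc j)) - F (a j)) = integral {a j..a (Suc j)} (\<lambda>s. f (a j)) - integral {a j..a (Suc j)} f"
          using Fstep[OF a0 ab aSt] ab aS by simp
        also have "\<dots> = integral {a j..a (Suc j)} (\<lambda>s. f (a j) - f s)"
          by (rule integral_diff[symmetric]) (use fi in auto)
        finally have eq: "c *\<^sub>R f (a j) - (F (a (Suc j)) - F (a j)) = integral {a j..a (Suc j)} (\<lambda>s. f (a j) - f s)" .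
        have "norm (integral {a j..a (Suc j)} (\<lambda>s. f (a j) - f s)) \<le> \<epsilon> * (a (Suc j) - a j)"
        proof (rule integral_bound[OF ab])
          show "continuous_on {a j..a (Suc j)} (\<lambda>s. f (a j) - f s)"
            by (intro continuous_intros continuous_on_subset[OF fcont]) (use a0 aSt in auto)
          fix s assume s: "s \<in> {a j..a (Suc j)}"
          have "dist (f s) (f (a j)) < \<epsilon>"
            by (rule ud) (use s a0 aSt aS elim(2) c_def in \<open>auto simp: dist_real_def\<close>)
          then show "norm (f (a j) - f s) \<le> \<epsilon>" by (simp add: dist_norm norm_minus_commute)
        qed
        then show ?thesis using eq aS by simp
      qed
      have "c *\<^sub>R (\<Sum>j<k n. f (a j)) - F (\<tau> n) = (\<Sum>j<k n. c *\<^sub>R f (a j) - (F (a (Suc j)) - F (a j)))"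
      proof -
        have "(\<Sum>j<k n. F (a (Suc j)) - F (a j)) = F (a (k n)) - F (a 0)"
          by (rule sum_lessThan_telescope)
        also have "\<dots> = F (\<tau> n)" using F0 unfolding a_def tauc by simp
        finally show ?thesis by (simp add: sum_subtractf scaleR_sum_right)
      qed
      also have "norm \<dots> \<le> (\<Sum>j<k n. \<epsilon> * c)"
        by (rule sum_norm_le) (use step in auto)
      also have "\<dots> = \<epsilon> * \<tau> n" unfolding tauc by simp
      also have "\<dots> \<le> \<epsilon> * t" using elim(1) eps by simp
      finally show ?case unfolding a_def c_def by (simp add: mult.assoc)
    qed
  qed
  have lim: "(\<lambda>n. (lam n * T n) *\<^sub>R (\<Sum>j<k n. blinfun_apply (R (mu n) (lam n) (\<tau> n) (real j * lam n * T n)) (w (real j * lam n * T n)))) \<longlonglongrightarrow> F t"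
    unfolding tendsto_iff
  proof (intro allI impI)
    fix e :: real assume e: "e > 0"
    define \<epsilon> where "\<epsilon> = e / (3 * (t + 1))"
    have eps: "\<epsilon> > 0" unfolding \<epsilon>_def using e t_pos by simp
    have et: "\<epsilon> * t < e / 3" unfolding \<epsilon>_def using e t_pos by (simp add: field_simps)
    have e3: "\<forall>\<^sub>F n in sequentially. dist (F (\<tau> n)) (F t) < e / 3"
      using tendstoD[OF Flim, of "e/3"] e by simp
    from U[OF eps] Riem[OF eps] e3 tau_le
    show "\<forall>\<^sub>F n in sequentially. dist ((lam n * T n) *\<^sub>R (\<Sum>j<k n. blinfun_apply (R (mu n) (lam n) (\<tau> n) (real j * lam n * T n)) (w (real j * lam n * T n)))) (F t) < e"
    proof eventually_elim
      case (elim n)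
      define c where "c = lam n * T n"
      have c0: "c > 0" unfolding c_def using lam_pos[of n] T_pos[of n] by simp
      define a where "a j = real j * lam n * T n" for j :: nat
      define A where "A j = blinfun_apply (R (mu n) (lam n) (\<tau> n) (a j)) (w (a j))" for j
      have tauc: "\<tau> n = real (k n) * c" unfolding \<tau>_def c_def by simp
      have t1: "norm (c *\<^sub>R (\<Sum>j<k n. A j - f (a j))) \<le> \<epsilon> * t"
      proof -
        have "norm (\<Sum>j<k n. A j - f (a j)) \<le> (\<Sum>j<k n. \<epsilon>)"
        proof (rule sum_norm_le)
          fix j assume "j \<in> {..<k n}"
          then have "real j \<le> real (k n)" by simp
          then have "a j \<le> \<tau> n" unfolding a_def \<tau>_def using lam_pos[of n] T_pos[of n]
            by (simp add: mult.assoc mult_right_mono)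
          moreover have "0 \<le> a j" unfolding a_def using lam_pos[of n] T_pos[of n] by simp
          ultimately show "norm (A j - f (a j)) \<le> \<epsilon>"
            using elim(1) unfolding A_def by (simp add: less_imp_le)
        qed
        then have "norm (c *\<^sub>R (\<Sum>j<k n. A j - f (a j))) \<le> c * (real (k n) * \<epsilon>)"
          using c0 by (simp add: mult_left_mono)
        also have "\<dots> = \<epsilon> * \<tau> n" unfolding tauc by simp
        also have "\<dots> \<le> \<epsilon> * t" using elim(4) eps by simp
        finally show ?thesis .
      qed
      have t2: "norm (c *\<^sub>R (\<Sum>j<k n. f (a j)) - F (\<tau> n)) \<le> \<epsilon> * t"
        using elim(2) unfolding a_def c_def .
      have eq: "c *\<^sub>R (\<Sum>j<k n. A j) - F t = c *\<^sub>R (\<Sum>j<k n. A j - f (a j)) + (c *\<^sub>R (\<Sum>j<k n. f (a j)) - F (\<tau> n)) + (F (\<tau> n) - F t)"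
        by (simp add: sum_subtractf scaleR_diff_right)
      have "norm (c *\<^sub>R (\<Sum>j<k n. A j) - F t) \<le> norm (c *\<^sub>R (\<Sum>j<k n. A j - f (a j))) + norm (c *\<^sub>R (\<Sum>j<k n. f (a j)) - F (\<tau> n)) + norm (F (\<tau> n) - F t)"
        unfolding eq by (intro order.trans[OF norm_triangle_ineq] add_right_mono norm_triangle_ineq)
      also have "\<dots> < e" using t1 t2 elim(3) et by (simp add: dist_norm)
      finally show ?case unfolding A_def a_def c_def by (simp add: dist_norm)
    qed
  qed
  then show ?thesis unfolding \<tau>_def F_def f_def .
qed

end
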